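(* For $n\geq 1$ and all integers $k$, the alternating Eulerian numbers satisfy $$2\widehat{A}_{n+1,k}=(k+1)(\widehat{A}_{n,k+1}+\widehat{A}_{n,k-1})+(n-k+1)(\widehat{A}_{n,k}+\widehat{A}_{n,k-2}),$$ with initial conditions $\widehat{A}_{1,0}=1$ and $\widehat{A}_{1,k}=0$ for $k\neq 0$.
   Context: For $\pi=\pi_1\cdots\pi_n\in\mathfrak{S}_n$ (permutations of $\{1,\dots,n\}$), $\widehat{D}(\pi)=\{2i:\pi_{2i}<\pi_{2i+1}\}\cup\{2i+1:\pi_{2i+1}>\pi_{2i+2}\}$ (indices in $\{1,\dots,n-1\}$), ${\rm altdes}(\pi)=|\widehat{D}(\pi)|$, and $\widehat{A}_{n,k}$ is the number of $\pi\in\mathfrak{S}_n$ with ${\rm altdes}(\pi)=k$ (so $\widehat{A}_{n,k}=0$ if $k<0$ or $k>n-1$). *)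

theory Defs
  imports "HOL-Combinatorics.Permutations"
begin

definition altdes_set :: "nat \<Rightarrow> (nat \<Rightarrow> nat) \<Rightarrow> nat set" where
  "altdes_set n p = {i \<in> {1..<n}. (even i \<and> p i < p (Suc i)) \<or> (odd i \<and> p i > p (Suc i))}"

definition altdes :: "nat \<Rightarrow> (nat \<Rightarrow> nat) \<Rightarrow> nat" where
  "altdes n p = card (altdes_set n p)"

definition altEuler :: "nat \<Rightarrow> int \<Rightarrow> int" where
  "altEuler n k = int (card {p. p permutes {1..n} \<and> int (altdes n p) = k})"

end

theory Submission imports Defs "HOL-Combinatorics.Multiset_Permutations" begin

definition pos :: "nat list \<Rightarrow> nat \<Rightarrow> nat" where
  "pos L x = the_inv_into {..<length L} ((!) L) x"

definition rc :: "nat set \<Rightarrow> nat \<Rightarrow> nat" where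
  "rc V x = (let L = sorted_list_of_set V in L ! (length L - 1 - pos L x))"

lemma pos_props:
  assumes "distinct L" "x \<in> set L"
  shows "pos L x < length L" "L ! pos L x = x"
proof -
  have inj: "inj_on ((!) L) {..<length L}" using assms(1) by (simp add: inj_on_nth)
  have im: "x \<in> (!) L ` {..<length L}" using assms(2) by (auto simp: in_set_conv_nth)
  show "pos L x < length L" unfolding pos_def using the_inv_into_into[OF inj im] by auto
  show "L ! pos L x = x" unfolding pos_def using f_the_inv_into_f[OF inj im] .
qed

lemma pos_nth: "distinct L \<Longrightarrow> i < length L \<Longrightarrow> pos L (L ! i) = i"
  unfolding pos_def by (rule the_inv_into_f_f) (auto simp: inj_on_nth)

lemma rc_props:
  assumes "finite V"
  shows "x \<in> V \<Longrightarrow> rc V x \<in> V"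
    and "x \<in> V \<Longrightarrow> y \<in> V \<Longrightarrow> x < y \<Longrightarrow> rc V y < rc V x"
    and "x \<in> V \<Longrightarrow> rc V (rc V x) = x"
proof -
  define L where "L = sorted_list_of_set V"
  have sw: "sorted_wrt (<) L" and sL: "set L = V" and lL: "length L = card V"
    using sorted_list_of_set_unique[OF assms] L_def by auto
  have dL: "distinct L" using sw by (simp add: strict_sorted_iff)
  have rcL: "rc V x = L ! (length L - 1 - pos L x)" for x unfolding rc_def L_def by (simp add: Let_def)
  {
    assume x: "x \<in> V"
    have p: "pos L x < length L" using pos_props[OF dL] x sL by auto
    have "length L - 1 - pos L x < length L" using p by linarith
    then have "L ! (length L - 1 - pos L x) \<in> set L" by (rule nth_mem)
    then show "rc V x \<in> V" using sL rcL[of x] by simp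
    have "rc V (rc V x) = L ! (length L - 1 - pos L (L ! (length L - 1 - pos L x)))"
      using rcL by simp
    also have "pos L (L ! (length L - 1 - pos L x)) = length L - 1 - pos L x"
      using p by (intro pos_nth dL) linarith
    also have "length L - 1 - (length L - 1 - pos L x) = pos L x" using p by linarith
    finally show "rc V (rc V x) = x" using pos_props[OF dL] x sL by auto
  }
  {
    assume x: "x \<in> V" and y: "y \<in> V" and xy: "x < y"
    have px: "pos L x < length L" "L ! pos L x = x" using pos_props[OF dL] x sL by auto
    have py: "pos L y < length L" "L ! pos L y = y" using pos_props[OF dL] y sL by auto
    have "pos L x < pos L y"
    proof (rule ccontr)
      assume "\<not> pos L x < pos L y"
      then have "pos L y < pos L x \<or> pos L y = pos L x" by linarith
      then show False
      proof
        assume "pos L y < pos L x"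
        then have "L ! pos L y < L ! pos L x" using sorted_wrt_nth_less[OF sw] px by blast
        then show False using px py xy by simp
      next
        assume "pos L y = pos L x" then show False using px py xy by simp
      qed
    qed
    then have "L ! (length L - 1 - pos L y) < L ! (length L - 1 - pos L x)"
      using px py by (intro sorted_wrt_nth_less[OF sw]) linarith+
    then show "rc V y < rc V x" using rcL by simp
  }
qed

definition st :: "bool \<Rightarrow> nat \<Rightarrow> nat \<Rightarrow> nat" where
  "st c x y = (if (if c then y < x else x < y) then 1 else 0)"

lemma bflip: "((\<not> b) = P) = (b = (\<not> P))" by blast

fun adl :: "bool \<Rightarrow> nat list \<Rightarrow> nat" where
  "adl b (x # y # zs) = st b x y + adl (\<not> b) (y # zs)"
| "adl b _ = 0"

lemma adl_sum: "adl b xs = (\<Sum>i < length xs - 1. st (b = even i) (xs ! i) (xs ! Suc i))"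
proof (induction b xs rule: adl.induct)
  case (1 b x y zs)
  have "(\<Sum>i < length (x # y # zs) - 1. st (b = even i) ((x # y # zs) ! i) ((x # y # zs) ! Suc i))
     = (\<Sum>i < Suc (length (y # zs) - 1). st (b = even i) ((x # y # zs) ! i) ((x # y # zs) ! Suc i))"
    by simp
  also have "\<dots> = st b x y + (\<Sum>i < length (y # zs) - 1. st (b = even (Suc i)) ((y # zs) ! i) ((y # zs) ! Suc i))"
    by (subst sum.lessThan_Suc_shift) simp
  also have "(\<Sum>i < length (y # zs) - 1. st (b = even (Suc i)) ((y # zs) ! i) ((y # zs) ! Suc i))
     = adl (\<not> b) (y # zs)" using 1 by (simp add: bflip)
  finally show ?case by simp
qed auto

lemma adl_append:
  "xs \<noteq> [] \<Longrightarrow> adl b (xs @ y # ys) =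
     adl b xs + st (b = even (length xs - 1)) (last xs) y + adl (b = even (length xs)) (y # ys)"
proof (induction xs arbitrary: b)
  case Nil then show ?case by simp
next
  case (Cons x xs)
  note IH = Cons.IH
  show ?case
  proof (cases xs)
    case Nil then show ?thesis by simp
  next
    case (Cons x' xs')
    have "adl b ((x # xs) @ y # ys) = st b x x' + adl (\<not> b) (xs @ y # ys)" using Cons by simp
    also have "adl (\<not> b) (xs @ y # ys) = adl (\<not> b) xs + st ((\<not> b) = even (length xs - 1)) (last xs) y
        + adl ((\<not> b) = even (length xs)) (y # ys)" using IH[of "\<not> b"] Cons by blast
    finally have e: "adl b ((x # xs) @ y # ys) = st b x x' + (adl (\<not> b) xs + st ((\<not> b) = even (length xs - 1)) (last xs) y
        + adl ((\<not> b) = even (length xs)) (y # ys))" .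
    have e2: "adl b (x # xs) = st b x x' + adl (\<not> b) xs" using Cons by simp
    have e3: "((\<not> b) = even (length xs - 1)) = (b = even (length (x # xs) - 1))" using Cons by auto
    have e4: "((\<not> b) = even (length xs)) = (b = even (length (x # xs)))" by auto
    have e5: "last (x # xs) = last xs" using Cons by simp
    show ?thesis unfolding e e2 e5 e3 e4 by simp
  qed
qed

lemma st_anti: "(x < y \<Longrightarrow> f y < f x) \<Longrightarrow> (y < x \<Longrightarrow> f x < f y) \<Longrightarrow> st (\<not> c) (f x) (f y) = st c x y"
  unfolding st_def by (cases "x < y"; cases "y < x") auto

lemma adl_map_anti:
  "(\<And>x y. x \<in> set xs \<Longrightarrow> y \<in> set xs \<Longrightarrow> x < y \<Longrightarrow> f y < f x) \<Longrightarrow> adl (\<not> b) (map f xs) = adl b xs"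
proof (induction b xs rule: adl.induct)
  case (1 b x y zs)
  have "st (\<not> b) (f x) (f y) = st b x y" using 1(2) by (intro st_anti) auto
  moreover have "adl (\<not> \<not> b) (map f (y # zs)) = adl (\<not> b) (y # zs)" using 1 by (intro 1(1)) auto
  ultimately show ?case by simp
next
  case ("2_1" b)
  then show ?case by simp
next
  case ("2_2" b v)
  then show ?case by simp
qed


definition cmp :: "nat list \<Rightarrow> nat list" where
  "cmp vs = map (rc (set vs)) vs"

lemma cmp_set: "set (cmp vs) = set vs"
proof -
  have f: "finite (set vs)" by simp
  show ?thesis unfolding cmp_def
  proof (auto simp: rc_props(1)[OF f])
    fix x assume x: "x \<in> set vs"
    then have "x = rc (set vs) (rc (set vs) x)" using rc_props(3)[OF f] by simp
    then show "x \<in> rc (set vs) ` set vs" using rc_props(1)[OF f x] by blast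
  qed
qed

lemma cmp_len [simp]: "length (cmp vs) = length vs" by (simp add: cmp_def)

lemma cmp_distinct: "distinct vs \<Longrightarrow> distinct (cmp vs)"
  unfolding cmp_def
  by (simp add: distinct_map) (metis inj_on_inverseI finite_set rc_props(3))

lemma cmp_cmp: "cmp (cmp vs) = vs"
proof -
  have "cmp (cmp vs) = map (rc (set vs)) (map (rc (set vs)) vs)"
    unfolding cmp_def[of "cmp vs"] cmp_set by (simp add: cmp_def)
  also have "\<dots> = map (rc (set vs) \<circ> rc (set vs)) vs" by simp
  also have "\<dots> = vs" by (rule map_idI) (simp add: rc_props(3))
  finally show ?thesis .
qed

lemma cmp_adl: "adl (\<not> b) (cmp vs) = adl b vs"
  unfolding cmp_def by (rule adl_map_anti) (auto intro: rc_props(2))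

lemma cmp_Cons: "cmp (v # vs) = rc (set (v # vs)) v # map (rc (set (v # vs))) vs"
  by (simp add: cmp_def)

abbreviation P :: "nat \<Rightarrow> nat list set" where
  "P n \<equiv> permutations_of_set {1..n}"

definition gc :: "nat \<Rightarrow> nat list \<Rightarrow> nat list" where
  "gc m xs = map (\<lambda>x. Suc m - x) xs"

lemma gc_P: "xs \<in> P m \<Longrightarrow> gc m xs \<in> P m"
proof -
  assume xs: "xs \<in> P m"
  have "inj_on (\<lambda>x. Suc m - x) {1..m}" by (auto intro!: inj_onI)
  moreover have "(\<lambda>x. Suc m - x) ` {1..m} = {1..m}"
  proof
    show "(\<lambda>x. Suc m - x) ` {1..m} \<subseteq> {1..m}" by auto
    show "{1..m} \<subseteq> (\<lambda>x. Suc m - x) ` {1..m}"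
    proof
      fix x assume "x \<in> {1..m}"
      then have "x = Suc m - (Suc m - x)" "Suc m - x \<in> {1..m}" by auto
      then show "x \<in> (\<lambda>x. Suc m - x) ` {1..m}" by (rule image_eqI)
    qed
  qed
  ultimately show ?thesis using xs
    by (auto simp: permutations_of_set_def gc_def distinct_map inj_on_subset)
qed

lemma gc_gc: "xs \<in> P m \<Longrightarrow> gc m (gc m xs) = xs"
  unfolding gc_def permutations_of_set_def by (auto intro!: map_idI)

lemma gc_adl: "xs \<in> P m \<Longrightarrow> adl (\<not> b) (gc m xs) = adl b xs"
  unfolding gc_def permutations_of_set_def by (rule adl_map_anti) auto

lemma gc_bij: "bij_betw (gc m) (P m) (P m)"
  using gc_gc gc_P by (intro bij_betw_byWitness[where f'="gc m"]) blast+

definition Fmax :: "nat \<Rightarrow> nat \<Rightarrow> nat list \<Rightarrow> nat list" where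
  "Fmax n j t = take j t @ Suc n # cmp (drop j t)"

definition Ginv :: "nat \<Rightarrow> nat list \<Rightarrow> nat \<times> nat list" where
  "Ginv n p = (pos p (Suc n), take (pos p (Suc n)) p @ cmp (drop (Suc (pos p (Suc n))) p))"

lemma P_len: "xs \<in> P n \<Longrightarrow> length xs = n"
  unfolding permutations_of_set_def using distinct_card by fastforce

lemma Fmax_bij: "bij_betw (\<lambda>(j, t). Fmax n j t) ({..n} \<times> P n) (P (Suc n))"
proof (rule bij_betw_byWitness[where f'="Ginv n"])
  show "\<forall>a\<in>{..n} \<times> P n. Ginv n (case a of (j, t) \<Rightarrow> Fmax n j t) = a"
  proof (intro ballI)
    fix a assume "a \<in> {..n} \<times> P n"
    then obtain j t where a: "a = (j, t)" and j: "j \<in> {..n}" and t: "t \<in> P n" by blast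
    have lt: "length t = n" using P_len[OF t] .
    have dt: "distinct t" and st: "set t = {1..n}" using t by (auto simp: permutations_of_set_def)
    let ?p = "Fmax n j t"
    have lp: "length ?p = Suc n" using lt j by (simp add: Fmax_def)
    have pj: "?p ! j = Suc n" using lt j by (simp add: Fmax_def nth_append)
    have "Suc n \<notin> set t" using st by auto
    then have nt: "Suc n \<notin> set (take j t)" "Suc n \<notin> set (cmp (drop j t))"
      using set_take_subset set_drop_subset cmp_set by (metis subsetD)+
    have dp: "distinct ?p" unfolding Fmax_def using dt nt
      by (auto simp: cmp_distinct cmp_set set_take_disj_set_drop_if_distinct)
    have ps: "pos ?p (Suc n) = j" using pos_nth[OF dp, of j] pj lp j by simp
    have "take j ?p = take j t" using lt j by (simp add: Fmax_def)
    moreover have "drop (Suc j) ?p = cmp (drop j t)" using lt j by (simp add: Fmax_def)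
    ultimately show "Ginv n (case a of (j, t) \<Rightarrow> Fmax n j t) = a" unfolding a
      unfolding Ginv_def using ps by (simp add: cmp_cmp)
  qed
  show "\<forall>a'\<in>P (Suc n). (case Ginv n a' of (j, t) \<Rightarrow> Fmax n j t) = a'"
  proof
    fix p assume p: "p \<in> P (Suc n)"
    have lp: "length p = Suc n" using P_len[OF p] .
    have dp: "distinct p" and sp: "set p = {1..Suc n}" using p by (auto simp: permutations_of_set_def)
    define j where "j = pos p (Suc n)"
    have jl: "j < length p" and pj: "p ! j = Suc n" using pos_props[OF dp] sp unfolding j_def by auto
    have "Fmax n j (take j p @ cmp (drop (Suc j) p)) = take j p @ Suc n # drop (Suc j) p"
      using jl by (simp add: Fmax_def cmp_cmp)
    also have "\<dots> = p" using id_take_nth_drop[OF jl] pj by simp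
    finally show "(case Ginv n p of (j, t) \<Rightarrow> Fmax n j t) = p" by (simp add: Ginv_def j_def)
  qed
  show "(\<lambda>(j, t). Fmax n j t) ` ({..n} \<times> P n) \<subseteq> P (Suc n)"
  proof (rule image_subsetI)
    fix a assume "a \<in> {..n} \<times> P n"
    then obtain j t where a: "a = (j, t)" and j: "j \<in> {..n}" and t: "t \<in> P n" by blast
    have dt: "distinct t" and st: "set t = {1..n}" using t by (auto simp: permutations_of_set_def)
    have "Suc n \<notin> set t" using st by auto
    then have nt: "Suc n \<notin> set (take j t)" "Suc n \<notin> set (cmp (drop j t))"
      using set_take_subset set_drop_subset cmp_set by (metis subsetD)+
    have dp: "distinct (Fmax n j t)" unfolding Fmax_def using dt nt
      by (auto simp: cmp_distinct cmp_set set_take_disj_set_drop_if_distinct)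
    have "set (Fmax n j t) = insert (Suc n) (set (take j t) \<union> set (drop j t))"
      by (auto simp: Fmax_def cmp_set)
    also have "\<dots> = insert (Suc n) (set t)" by (metis set_append append_take_drop_id)
    also have "\<dots> = {1..Suc n}" using st by auto
    finally show "(case a of (j, t) \<Rightarrow> Fmax n j t) \<in> P (Suc n)" using dp a by (simp add: permutations_of_set_def)
  qed
  show "Ginv n ` P (Suc n) \<subseteq> {..n} \<times> P n"
  proof (rule image_subsetI)
    fix p assume p: "p \<in> P (Suc n)"
    have lp: "length p = Suc n" using P_len[OF p] .
    have dp: "distinct p" and sp: "set p = {1..Suc n}" using p by (auto simp: permutations_of_set_def)
    define j where "j = pos p (Suc n)"
    have jl: "j < length p" and pj: "p ! j = Suc n" using pos_props[OF dp] sp unfolding j_def by auto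
    have pe: "p = take j p @ Suc n # drop (Suc j) p" using id_take_nth_drop[OF jl] pj by simp
    have d2: "distinct (take j p @ Suc n # drop (Suc j) p)" using dp pe by simp
    have s2: "set (take j p @ Suc n # drop (Suc j) p) = {1..Suc n}" using sp pe by simp
    have "set (take j p @ cmp (drop (Suc j) p)) = {1..n}"
    proof -
      have nA: "Suc n \<notin> set (take j p)" "Suc n \<notin> set (drop (Suc j) p)" using d2 by auto
      have "set (take j p) \<union> set (drop (Suc j) p) = set (take j p @ Suc n # drop (Suc j) p) - {Suc n}"
        using nA by auto
      also have "\<dots> = {1..n}" unfolding s2 by auto
      finally show ?thesis by (simp add: cmp_set)
    qed
    moreover have "distinct (take j p @ cmp (drop (Suc j) p))"
      using d2 by (auto simp: cmp_distinct cmp_set)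
    ultimately show "Ginv n p \<in> {..n} \<times> P n"
      using jl lp by (auto simp: Ginv_def j_def[symmetric] permutations_of_set_def)
  qed
qed


lemma st_M1: "x < M \<Longrightarrow> st c x M = (if c then 0 else 1)" by (simp add: st_def)
lemma st_M2: "y < M \<Longrightarrow> st c M y = (if c then 1 else 0)" by (simp add: st_def)

lemma P_facts: "t \<in> P n \<Longrightarrow> distinct t \<and> set t = {1..n} \<and> length t = n"
  using P_len by (auto simp: permutations_of_set_def)

lemma Fmax_adl0:
  assumes t: "t \<in> P n" and n: "n \<ge> 1"
  shows "adl b (Fmax n 0 t) = (if b then 1 else 0) + adl b t"
proof -
  have tf: "distinct t" "set t = {1..n}" "length t = n" using P_facts[OF t] by auto
  obtain c cs where cc: "cmp t = c # cs" using tf n by (cases "cmp t") (auto simp flip: length_0_conv)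
  have "c \<in> set t" using cmp_set[of t] cc by (metis list.set_intros(1))
  then have cM: "c < Suc n" using tf by auto
  have "adl b (Fmax n 0 t) = adl b (Suc n # c # cs)" by (simp add: Fmax_def cc)
  also have "\<dots> = st b (Suc n) c + adl (\<not> b) (cmp t)" by (simp add: cc)
  also have "\<dots> = (if b then 1 else 0) + adl b t" by (simp add: st_M2[OF cM] cmp_adl)
  finally show ?thesis .
qed

lemma Fmax_adln:
  assumes t: "t \<in> P n" and n: "n \<ge> 1"
  shows "adl b (Fmax n n t) = adl b t + (if b = even n then 1 else 0)"
proof -
  have tf: "distinct t" "set t = {1..n}" "length t = n" using P_facts[OF t] by auto
  have ne: "t \<noteq> []" using tf n by auto
  have "last t \<in> set t" using ne by simp
  then have lM: "last t < Suc n" using tf by auto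
  have "Fmax n n t = t @ [Suc n]" using tf by (simp add: Fmax_def cmp_def)
  then have "adl b (Fmax n n t) = adl b t + st (b = even (length t - 1)) (last t) (Suc n) + adl (b = even (length t)) [Suc n]"
    using adl_append[OF ne, of b "Suc n" "[]"] by simp
  also have "\<dots> = adl b t + (if b = even n then 1 else 0)"
    using n tf by (simp add: st_M1[OF lM])
  finally show ?thesis .
qed

lemma Fmax_adlmid:
  assumes t: "t \<in> P n" and j: "0 < j" "j < n"
  shows "int (adl b (Fmax n j t)) = int (adl b t) - int (st (b = even (j - 1)) (t ! (j - 1)) (t ! j))
          + 2 * (if b = even j then 1 else 0)"
proof -
  have tf: "distinct t" "set t = {1..n}" "length t = n" using P_facts[OF t] by auto
  define us where "us = take j t"
  have une: "us \<noteq> []" and lus: "length us = j"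
    using j tf by (auto simp: us_def)
  have last: "last us = t ! (j - 1)"
    using une lus j unfolding us_def by (simp add: last_conv_nth)
  have dr: "drop j t = t ! j # drop (Suc j) t" using j tf by (simp add: Cons_nth_drop_Suc)
  have te: "t = us @ t ! j # drop (Suc j) t" using dr us_def by (metis append_take_drop_id)
  have A: "adl b t = adl b us + st (b = even (j - 1)) (t ! (j - 1)) (t ! j) + adl (b = even j) (drop j t)"
    using adl_append[OF une, of b "t ! j" "drop (Suc j) t"] te lus last dr by simp
  obtain c cs where cc: "cmp (drop j t) = c # cs" using dr by (cases "cmp (drop j t)") (auto simp flip: length_0_conv)
  have "c \<in> set (drop j t)" using cmp_set[of "drop j t"] cc by (metis list.set_intros(1))
  then have cM: "c < Suc n" using tf set_drop_subset by fastforce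
  have tM: "t ! (j - 1) < Suc n" using tf j by (metis atLeastAtMost_iff le_imp_less_Suc less_imp_diff_less nth_mem)
  have "adl b (Fmax n j t) = adl b (us @ Suc n # cmp (drop j t))" by (simp add: Fmax_def us_def)
  also have "\<dots> = adl b us + st (b = even (j - 1)) (t ! (j - 1)) (Suc n) + adl (b = even j) (Suc n # c # cs)"
    using adl_append[OF une, of b "Suc n" "cmp (drop j t)"] lus last cc by simp
  also have "adl (b = even j) (Suc n # c # cs) = st (b = even j) (Suc n) c + adl (\<not> (b = even j)) (cmp (drop j t))"
    by (simp add: cc)
  also have "\<dots> = (if b = even j then 1 else 0) + adl (b = even j) (drop j t)"
    using cmp_adl[of "b = even j" "drop j t"] by (simp add: st_M2[OF cM])
  also have "st (b = even (j - 1)) (t ! (j - 1)) (Suc n) = (if b = even j then 1 else 0)"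
    unfolding st_M1[OF tM] using j by auto
  finally show ?thesis using A by simp
qed


lemma st01: "st c x y = 0 \<or> st c x y = 1" by (simp add: st_def)

lemma per_tau:
  assumes t: "t \<in> P n" and n: "n \<ge> 1" and a: "a = int (adl True t)"
  shows "(\<Sum>j\<le>n. of_bool (int (adl True (Fmax n j t)) = k) + of_bool (int (adl False (Fmax n j (gc n t))) = k))
    = (a + 2) * of_bool (k = a + 1) + a * of_bool (k = a - 1) + (int n - 1 - a) * of_bool (k = a + 2)
      + (int n + 1 - a) * of_bool (k = a)"
proof -
  have tf: "distinct t" "set t = {1..n}" "length t = n" using P_facts[OF t] by auto
  define s where "s = gc n t"
  have s: "s \<in> P n" using gc_P[OF t] s_def by simp
  have sa: "adl False s = adl True t" using gc_adl[OF t, of True] s_def by simp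
  define tt where "tt i = int (st (even i) (t ! i) (t ! Suc i))" for i
  have tts: "int (st (odd i) (s ! i) (s ! Suc i)) = tt i" if i: "i < n - 1" for i
  proof -
    have l: "i < length t" "Suc i < length t" using i tf by auto
    have "s ! i = Suc n - t ! i" "s ! Suc i = Suc n - t ! Suc i" using l by (simp_all add: s_def gc_def)
    moreover have "t ! i \<in> {1..n}" "t ! Suc i \<in> {1..n}" using l tf nth_mem by blast+
    moreover have "st (\<not> even i) (Suc n - t ! i) (Suc n - t ! Suc i) = st (even i) (t ! i) (t ! Suc i)"
      if "t ! i \<in> {1..n}" "t ! Suc i \<in> {1..n}"
      by (rule st_anti[where f="\<lambda>x. Suc n - x"]) (use that in auto)
    ultimately have "st (\<not> even i) (s ! i) (s ! Suc i) = st (even i) (t ! i) (t ! Suc i)"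
      by simp
    then show ?thesis by (simp add: tt_def)
  qed
  define f where "f j = of_bool (int (adl True (Fmax n j t)) = k) + (of_bool (int (adl False (Fmax n j s)) = k) :: int)" for j
  define X where "X = of_bool (k = a + 1) + (of_bool (k = a - 1) :: int)"
  define Y where "Y = of_bool (k = a + 2) + (of_bool (k = a) :: int)"
  obtain m where m: "n = Suc m" using n by (cases n) auto
  have split: "(\<Sum>j\<le>n. f j) = f 0 + f n + (\<Sum>i<n - 1. f (Suc i))"
  proof -
    have "(\<Sum>j\<le>n. f j) = (\<Sum>j<Suc (Suc m). f j)" using m lessThan_Suc_atMost by metis
    also have "\<dots> = f 0 + (\<Sum>j<Suc m. f (Suc j))" by (rule sum.lessThan_Suc_shift)
    also have "\<dots> = f 0 + ((\<Sum>j<m. f (Suc j)) + f (Suc m))" by simp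
    finally show ?thesis using m by simp
  qed
  have f0: "f 0 = of_bool (k = a + 1) + of_bool (k = a)"
    unfolding f_def using Fmax_adl0[OF t n, of True] Fmax_adl0[OF s n, of False] sa a by auto
  have fn: "f n = of_bool (k = a + 1) + of_bool (k = a)"
    unfolding f_def using Fmax_adln[OF t n, of True] Fmax_adln[OF s n, of False] sa a by auto
  have fm: "f (Suc i) = tt i * X + (1 - tt i) * Y" if i: "i < n - 1" for i
  proof -
    have j: "0 < Suc i" "Suc i < n" using i by auto
    have e1: "int (adl True (Fmax n (Suc i) t)) = a - tt i + 2 * of_bool (even (Suc i))"
      using Fmax_adlmid[OF t j, of True] a by (simp add: tt_def)
    have e2: "int (adl False (Fmax n (Suc i) s)) = a - tt i + 2 * of_bool (odd (Suc i))"
      using Fmax_adlmid[OF s j, of False] sa a tts[OF i] by simp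
    have "tt i = 0 \<or> tt i = 1" using st01 by (simp add: tt_def)
    then show ?thesis unfolding f_def e1 e2 X_def Y_def by (cases "even i") auto
  qed
  have "(\<Sum>i<n - 1. f (Suc i)) = (\<Sum>i<n - 1. tt i * X + (1 - tt i) * Y)" using fm by simp
  also have "\<dots> = (\<Sum>i<n - 1. tt i) * X + (int (n - 1) - (\<Sum>i<n - 1. tt i)) * Y"
    by (simp add: sum.distrib sum_distrib_left sum_distrib_right sum_subtractf algebra_simps)
  also have "(\<Sum>i<n - 1. tt i) = a"
    unfolding a adl_sum tf(3) tt_def by (simp add: of_nat_sum)
  finally have mid: "(\<Sum>i<n - 1. f (Suc i)) = a * X + (int (n - 1) - a) * Y" .
  have "(\<Sum>j\<le>n. f j) = (a + 2) * of_bool (k = a + 1) + a * of_bool (k = a - 1) + (int n - 1 - a) * of_bool (k = a + 2)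
      + (int n + 1 - a) * of_bool (k = a)"
    unfolding split f0 fn mid X_def Y_def using n by (simp add: algebra_simps of_nat_diff)
  then show ?thesis unfolding f_def s_def .
qed


lemma sum4: "(\<Sum>x\<in>A. (c1::int) * f1 x + c1 * f2 x + c2 * f3 x + c2 * f4 x)
   = c1 * (sum f1 A + sum f2 A) + c2 * (sum f3 A + sum f4 A)"
  by (simp add: sum.distrib sum_distrib_left distrib_left del: sum_of_bool_eq sum_mult_of_bool_eq sum_of_bool_mult_eq)

definition Ah :: "nat \<Rightarrow> int \<Rightarrow> int" where
  "Ah n k = (\<Sum>xs\<in>P n. of_bool (int (adl True xs) = k))"

lemma Ah_rec:
  assumes n: "n \<ge> 1"
  shows "2 * Ah (Suc n) k = (k + 1) * (Ah n (k + 1) + Ah n (k - 1)) + (int n - k + 1) * (Ah n k + Ah n (k - 2))"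
proof -
  define g where "g b p = (of_bool (int (adl b p) = k) :: int)" for b p
  have prod: "(\<Sum>p\<in>P (Suc n). g b p) = (\<Sum>t\<in>P n. \<Sum>j\<le>n. g b (Fmax n j t))" for b
  proof -
    have "(\<Sum>p\<in>P (Suc n). g b p) = (\<Sum>x\<in>{..n} \<times> P n. g b (case x of (j, t) \<Rightarrow> Fmax n j t))"
      by (rule sum.reindex_bij_betw[OF Fmax_bij, symmetric])
    also have "\<dots> = (\<Sum>j\<le>n. \<Sum>t\<in>P n. g b (Fmax n j t))"
      by (subst sum.cartesian_product) (simp add: case_prod_beta)
    also have "\<dots> = (\<Sum>t\<in>P n. \<Sum>j\<le>n. g b (Fmax n j t))" by (rule sum.swap)
    finally show ?thesis .
  qed
  have h1: "Ah (Suc n) k = (\<Sum>t\<in>P n. \<Sum>j\<le>n. g True (Fmax n j t))"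
    unfolding Ah_def using prod[of True] by (simp add: g_def del: sum_of_bool_eq)
  have "Ah (Suc n) k = (\<Sum>p\<in>P (Suc n). g True (gc (Suc n) p))"
    unfolding Ah_def g_def by (rule sum.reindex_bij_betw[OF gc_bij, symmetric])
  also have "\<dots> = (\<Sum>p\<in>P (Suc n). g False p)"
    by (rule sum.cong) (auto simp: g_def gc_adl[of _ _ False, simplified] simp del: sum_of_bool_eq)
  also have "\<dots> = (\<Sum>t\<in>P n. \<Sum>j\<le>n. g False (Fmax n j t))" by (rule prod)
  also have "\<dots> = (\<Sum>t\<in>P n. \<Sum>j\<le>n. g False (Fmax n j (gc n t)))"
    by (rule sum.reindex_bij_betw[OF gc_bij, symmetric])
  finally have h2: "Ah (Suc n) k = (\<Sum>t\<in>P n. \<Sum>j\<le>n. g False (Fmax n j (gc n t)))" .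
  define R where "R a = (a + 2) * of_bool (k = a + 1) + a * of_bool (k = a - 1) + (int n - 1 - a) * of_bool (k = a + 2)
      + (int n + 1 - a) * (of_bool (k = a) :: int)" for a
  have "2 * Ah (Suc n) k = (\<Sum>t\<in>P n. \<Sum>j\<le>n. g True (Fmax n j t) + g False (Fmax n j (gc n t)))"
    unfolding mult_2 using h1 h2 by (simp add: sum.distrib del: sum_of_bool_eq)
  also have "\<dots> = (\<Sum>t\<in>P n. R (int (adl True t)))"
    by (rule sum.cong) (simp_all add: g_def R_def per_tau[OF _ n] del: sum_of_bool_eq)
  also have "\<dots> = (\<Sum>t\<in>P n. (k + 1) * of_bool (int (adl True t) = k + 1) + (k + 1) * of_bool (int (adl True t) = k - 1)
        + (int n - k + 1) * of_bool (int (adl True t) = k) + (int n - k + 1) * of_bool (int (adl True t) = k - 2))"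
  proof (rule sum.cong)
    fix t
    show "R (int (adl True t)) = (k + 1) * of_bool (int (adl True t) = k + 1) + (k + 1) * of_bool (int (adl True t) = k - 1)
        + (int n - k + 1) * of_bool (int (adl True t) = k) + (int n - k + 1) * of_bool (int (adl True t) = k - 2)"
      unfolding R_def by (cases "int (adl True t) = k + 1"; cases "int (adl True t) = k - 1";
          cases "int (adl True t) = k"; cases "int (adl True t) = k - 2"; simp)
  qed simp
  also have "\<dots> = (k + 1) * (Ah n (k + 1) + Ah n (k - 1)) + (int n - k + 1) * (Ah n k + Ah n (k - 2))"
    unfolding Ah_def by (rule sum4)
  finally show ?thesis .
qed


definition Phi :: "nat \<Rightarrow> (nat \<Rightarrow> nat) \<Rightarrow> nat list" where
  "Phi n p = map p [1..<n+1]"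

definition Psi :: "nat \<Rightarrow> nat list \<Rightarrow> nat \<Rightarrow> nat" where
  "Psi n xs = (\<lambda>x. if x \<in> {1..n} then xs ! (x - 1) else x)"

lemma Phi_nth: "i < n \<Longrightarrow> Phi n p ! i = p (Suc i)"
  unfolding Phi_def by (simp del: upt_Suc)

lemma Phi_len: "length (Phi n p) = n"
  unfolding Phi_def by (simp del: upt_Suc)

lemma Phi_bij: "bij_betw (Phi n) {p. p permutes {1..n}} (P n)"
proof (rule bij_betw_byWitness[where f'="Psi n"])
  show "\<forall>p\<in>{p. p permutes {1..n}}. Psi n (Phi n p) = p"
  proof
    fix p assume "p \<in> {p. p permutes {1..n}}"
    then have p: "p permutes {1..n}" by simp
    show "Psi n (Phi n p) = p"
    proof
      fix x show "Psi n (Phi n p) x = p x"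
      proof (cases "x \<in> {1..n}")
        case True
        then have "Phi n p ! (x - 1) = p (Suc (x - 1))" by (intro Phi_nth) auto
        then show ?thesis using True by (simp add: Psi_def)
      next
        case False
        have "Psi n (Phi n p) x = x" unfolding Psi_def using False by (rule if_not_P)
        then show ?thesis using permutes_not_in[OF p, of x] False by simp
      qed
    qed
  qed
  show "\<forall>xs\<in>P n. Phi n (Psi n xs) = xs"
  proof
    fix xs assume xs: "xs \<in> P n"
    have l: "length xs = n" using P_len[OF xs] .
    show "Phi n (Psi n xs) = xs"
      by (rule nth_equalityI) (auto simp: l Phi_len Phi_nth Psi_def)
  qed
  show "Phi n ` {p. p permutes {1..n}} \<subseteq> P n"
  proof
    fix xs assume "xs \<in> Phi n ` {p. p permutes {1..n}}"
    then obtain p where p: "p permutes {1..n}" and xs: "xs = Phi n p" by blast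
    have s: "set [1..<n+1] = {1..n}" by auto
    have "distinct xs" unfolding xs Phi_def distinct_map using permutes_inj_on[OF p] s by simp
    moreover have "set xs = {1..n}" unfolding xs Phi_def using permutes_image[OF p] s by simp
    ultimately show "xs \<in> P n" by (simp add: permutations_of_set_def)
  qed
  show "Psi n ` P n \<subseteq> {p. p permutes {1..n}}"
  proof
    fix q assume "q \<in> Psi n ` P n"
    then obtain xs where xs: "xs \<in> P n" and q: "q = Psi n xs" by blast
    have d: "distinct xs" and s: "set xs = {1..n}" and l: "length xs = n" using P_facts[OF xs] by auto
    have inj: "inj_on q {1..n}"
    proof (rule inj_onI)
      fix x y assume x: "x \<in> {1..n}" and y: "y \<in> {1..n}" and e: "q x = q y"
      then have "xs ! (x - 1) = xs ! (y - 1)" by (simp add: q Psi_def)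
      then have "x - 1 = y - 1" using nth_eq_iff_index_eq[OF d] x y l by auto
      then show "x = y" using x y by auto
    qed
    have im: "q ` {1..n} = {1..n}"
    proof
      show "q ` {1..n} \<subseteq> {1..n}"
      proof
        fix y assume "y \<in> q ` {1..n}"
        then obtain x where x: "x \<in> {1..n}" and y: "y = q x" by blast
        have "xs ! (x - 1) \<in> set xs" using x l by (intro nth_mem) auto
        then show "y \<in> {1..n}" using s x y by (simp add: q Psi_def)
      qed
      show "{1..n} \<subseteq> q ` {1..n}"
      proof
        fix y assume "y \<in> {1..n}"
        then obtain i where i: "i < length xs" "xs ! i = y" using s by (metis in_set_conv_nth)
        then have "q (Suc i) = y" "Suc i \<in> {1..n}" using l by (auto simp: q Psi_def)
        then show "y \<in> q ` {1..n}" by (metis image_eqI)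
      qed
    qed
    have bq: "bij_betw q {1..n} {1..n}" unfolding bij_betw_def using inj im by simp
    have oq: "q x = x" if "x \<notin> {1..n}" for x unfolding q Psi_def using that by (rule if_not_P)
    have "q permutes {1..n}" using bq oq by (rule bij_imp_permutes)
    then show "q \<in> {p. p permutes {1..n}}" by simp
  qed
qed

lemma altdes_adl: "altdes n p = adl True (Phi n p)"
proof -
  define Q where "Q i = ((even i \<and> p i < p (Suc i)) \<or> (odd i \<and> p i > p (Suc i)))" for i
  have "altdes n p = card ({1..<n} \<inter> {i. Q i})"
    unfolding altdes_def altdes_set_def Q_def by (rule arg_cong[where f=card]) auto
  also have "\<dots> = (\<Sum>i\<in>{1..<n}. of_bool (Q i))" by simp
  also have "{1..<n} = Suc ` {..<n - 1}" unfolding image_Suc_lessThan by auto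
  also have "(\<Sum>i\<in>Suc ` {..<n - 1}. of_bool (Q i)) = (\<Sum>i<n - 1. of_bool (Q (Suc i)))"
    by (simp add: sum.reindex del: sum_of_bool_eq)
  also have "\<dots> = (\<Sum>i<n - 1. st (True = even i) (Phi n p ! i) (Phi n p ! Suc i))"
  proof (rule sum.cong)
    fix i assume "i \<in> {..<n - 1}"
    then have i: "i < n - 1" by simp
    then have "Phi n p ! i = p (Suc i)" "Phi n p ! Suc i = p (Suc (Suc i))" by (auto intro!: Phi_nth)
    then show "of_bool (Q (Suc i)) = st (True = even i) (Phi n p ! i) (Phi n p ! Suc i)"
      by (auto simp: Q_def st_def)
  qed simp
  also have "\<dots> = adl True (Phi n p)" by (simp add: adl_sum Phi_len)
  finally show ?thesis .
qed

lemma altEuler_Ah: "altEuler n k = Ah n k"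
proof -
  have fin: "finite {p. p permutes {1..n}}" by (rule finite_permutations) simp
  have "Ah n k = (\<Sum>p\<in>{p. p permutes {1..n}}. of_bool (int (adl True (Phi n p)) = k))"
    unfolding Ah_def by (rule sum.reindex_bij_betw[OF Phi_bij, symmetric])
  also have "\<dots> = (\<Sum>p\<in>{p. p permutes {1..n}}. of_bool (int (altdes n p) = k))"
    by (simp add: altdes_adl del: sum_of_bool_eq)
  also have "\<dots> = int (card ({p. p permutes {1..n}} \<inter> {p. int (altdes n p) = k}))"
    using fin by simp
  also have "{p. p permutes {1..n}} \<inter> {p. int (altdes n p) = k} = {p. p permutes {1..n} \<and> int (altdes n p) = k}"
    by auto
  finally show ?thesis unfolding altEuler_def by simp
qed

lemma P1: "P 1 = {[1]}"
proof
  show "P 1 \<subseteq> {[1]}"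
  proof
    fix xs assume xs: "xs \<in> P 1"
    have "length xs = 1" "set xs = {1}" using P_facts[OF xs] by auto
    then show "xs \<in> {[1]}" by (cases xs) auto
  qed
  show "{[1]} \<subseteq> P 1" by (simp add: permutations_of_set_def)
qed

theorem theorem2p1:
  shows "(\<forall>n::nat. \<forall>k::int. n \<ge> 1 \<longrightarrow>
            2 * altEuler (n + 1) k =
              (k + 1) * (altEuler n (k + 1) + altEuler n (k - 1))
              + (int n - k + 1) * (altEuler n k + altEuler n (k - 2)))
         \<and> altEuler 1 0 = 1 \<and> (\<forall>k::int. k \<noteq> 0 \<longrightarrow> altEuler 1 k = 0)"
proof -
  have A1: "altEuler 1 k = of_bool (k = 0)" for k
    unfolding altEuler_Ah Ah_def P1 by auto
  show ?thesis using Ah_rec unfolding altEuler_Ah[symmetric] A1 by auto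
qed

end
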